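(* Let $0<q<p\le 1$, let $n\in\mathbb{N}$, $k\in\{0,1,2,\dots\}$, and for $t\in[0,1]$ put $$b_{n,k}^{(p,q)}(qt)=\frac{1}{p^{k(n-1)+n(n-1)/2}}\begin{bmatrix}n+k+1\\k\end{bmatrix}_{p,q}(qt)^k(1-qt)_{p,q}^{n}.$$ Then for every $s=0,1,2,\dots$, $$\int_0^1 b_{n,k}^{(p,q)}(qt)\,t^s\,d_{p,q}t=\frac{[n+k+1]_{p,q}!\,[k+s]_{p,q}!}{[k]_{p,q}!\,[n+k+s+1]_{p,q}!}\cdot\frac{(pq)^k}{[n+1]_{p,q}}\,p^{n(s+1)}.$$
   Context: For $0<q<p\le1$: $[n]_{p,q}=\frac{p^n-q^n}{p-q}$; $[n]_{p,q}!=[1]_{p,q}[2]_{p,q}\cdots[n]_{p,q}$ for $n\ge1$ and $[0]_{p,q}!=1$; $\begin{bmatrix}n\\k\end{bmatrix}_{p,q}=\frac{[n]_{p,q}!}{[k]_{p,q}![n-k]_{p,q}!}$; $(x+y)_{p,q}^n=\prod_{j=0}^{n-1}(p^jx+q^jy)$, so $(1-qt)^n_{p,q}=\prod_{j=0}^{n-1}(p^j-q^{j+1}t)$. The $(p,q)$-integral is $\int_0^a f(t)\,d_{p,q}t=(p-q)a\sum_{j=0}^\infty \frac{q^j}{p^{j+1}}f\!\left(\frac{q^j}{p^{j+1}}a\right)$. *)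

theory Defs
  imports "HOL-Analysis.Analysis"
begin

definition pq_num :: "real \<Rightarrow> real \<Rightarrow> nat \<Rightarrow> real" where
  "pq_num p q n = (p ^ n - q ^ n) / (p - q)"

definition pq_fact :: "real \<Rightarrow> real \<Rightarrow> nat \<Rightarrow> real" where
  "pq_fact p q n = (\<Prod>i=1..n. pq_num p q i)"

definition pq_binom :: "real \<Rightarrow> real \<Rightarrow> nat \<Rightarrow> nat \<Rightarrow> real" where
  "pq_binom p q n k = pq_fact p q n / (pq_fact p q k * pq_fact p q (n - k))"

definition pq_power :: "real \<Rightarrow> real \<Rightarrow> real \<Rightarrow> real \<Rightarrow> nat \<Rightarrow> real" where
  "pq_power p q x y n = (\<Prod>j<n. p ^ j * x + q ^ j * y)"

definition pq_integral :: "real \<Rightarrow> real \<Rightarrow> real \<Rightarrow> (real \<Rightarrow> real) \<Rightarrow> real" where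
  "pq_integral p q a f =
     (p - q) * a * (\<Sum>j. q ^ j / p ^ (j + 1) * f (q ^ j / p ^ (j + 1) * a))"

definition pq_bern :: "real \<Rightarrow> real \<Rightarrow> nat \<Rightarrow> nat \<Rightarrow> real \<Rightarrow> real" where
  "pq_bern p q n k t =
     1 / p powr (real k * (real n - 1) + real n * (real n - 1) / 2)
     * pq_binom p q (n + k + 1) k * (q * t) ^ k * pq_power p q 1 (- (q * t)) n"

end

theory Submission
  imports Defs
begin

fun tri :: "nat \<Rightarrow> nat" where
  "tri 0 = 0" | "tri (Suc n) = tri n + Suc n"

lemma tri2: "2 * tri n = n * (n + 1)"
  by (induction n) auto

lemma num_add: "p \<noteq> q \<Longrightarrow> pq_num p q (a + b) = p ^ b * pq_num p q a + q ^ a * pq_num p q b"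
proof -
  assume "p \<noteq> q"
  have "p^(a+b)-q^(a+b) = p^b*(p^a-q^a) + q^a*(p^b-q^b)" by (simp add: power_add algebra_simps)
  then show ?thesis by (simp add: pq_num_def add_divide_distrib)
qed

lemma num_pos: "0 < q \<Longrightarrow> q < p \<Longrightarrow> i \<ge> 1 \<Longrightarrow> pq_num p q i > 0"
  unfolding pq_num_def using power_strict_mono[of q p i] by auto

lemma fact_Suc: "pq_fact p q (Suc n) = pq_fact p q n * pq_num p q (Suc n)"
  unfolding pq_fact_def by (simp add: prod.nat_ivl_Suc')

lemma fact_pos: "0 < q \<Longrightarrow> q < p \<Longrightarrow> pq_fact p q n > 0"
  unfolding pq_fact_def by (rule prod_pos) (auto intro: num_pos)

definition FF :: "real \<Rightarrow> real \<Rightarrow> nat \<Rightarrow> nat \<Rightarrow> real" where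
  "FF p q n m = pq_fact p q m * pq_fact p q n / pq_fact p q (n + m + 1) * p ^ (n * m + tri n)"

lemma FF_rec:
  assumes "0 < q" "q < p"
  shows "FF p q (Suc n) m = p ^ n * FF p q n m - q ^ (n + 1) * FF p q n (m + 1)"
proof -
  define A where "A = pq_fact p q m"
  define B where "B = pq_fact p q n"
  define D where "D = pq_fact p q (n + m + 1)"
  define E where "E = p ^ (n * m + tri n)"
  define N where "N = pq_num p q (n + m + 2)"
  have N: "N > 0" unfolding N_def using num_pos assms by auto
  have D: "D > 0" unfolding D_def using fact_pos assms by auto
  have id: "N = p ^ (m + 1) * pq_num p q (n + 1) + q ^ (n + 1) * pq_num p q (m + 1)"
    unfolding N_def using num_add[of p q "n+1" "m+1"] assms by (simp add: algebra_simps)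
  have f1: "pq_fact p q (Suc n + m + 1) = D * N"
    unfolding D_def N_def using fact_Suc[of p q "n + m + 1"] by (simp add: add.commute)
  have f2: "pq_fact p q (n + (m + 1) + 1) = D * N"
    using f1 by (simp add: algebra_simps)
  have f3: "pq_fact p q (Suc n) = B * pq_num p q (n + 1)" unfolding B_def using fact_Suc by simp
  have f4: "pq_fact p q (m + 1) = A * pq_num p q (m + 1)" unfolding A_def using fact_Suc by simp
  have e1: "p ^ (Suc n * m + tri (Suc n)) = E * p ^ (m + n + 1)"
    unfolding E_def by (simp add: power_add[symmetric] algebra_simps)
  have e2: "p ^ (n * (m + 1) + tri n) = E * p ^ n"
    unfolding E_def by (simp add: power_add[symmetric] algebra_simps)
  have "FF p q (Suc n) m = A * B * pq_num p q (n + 1) / (D * N) * (E * p ^ (m + n + 1))"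
    unfolding FF_def using f1 f3 e1 A_def by simp
  moreover have "FF p q n m = A * B / D * E" unfolding FF_def A_def B_def D_def E_def by simp
  moreover have "FF p q n (m + 1) = A * pq_num p q (m + 1) * B / (D * N) * (E * p ^ n)"
    unfolding FF_def using f2 f4 e2 B_def by simp
  moreover have key: "N - q ^ (n + 1) * pq_num p q (m + 1) = p ^ (m + 1) * pq_num p q (n + 1)"
    using id by simp
  moreover have "p ^ n * (A * B / D * E) - q ^ (n + 1) * (A * pq_num p q (m + 1) * B / (D * N) * (E * p ^ n))
      = A * B * E * p ^ n / (D * N) * (N - q ^ (n + 1) * pq_num p q (m + 1))"
    using N D by (simp add: field_simps)
  moreover have "p ^ (m + n + 1) = p ^ n * p ^ (m + 1)" by (simp add: power_add ac_simps)
  ultimately show ?thesis by (simp add: mult_ac power_add)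
qed

lemma sums_main:
  assumes "0 < q" "q < p"
  shows "(\<lambda>j. q ^ j / p ^ (j + 1) * ((q ^ j / p ^ (j + 1)) ^ m * pq_power p q 1 (- (q * (q ^ j / p ^ (j + 1)))) n))
         sums (FF p q n m / (p - q))"
  using assms
proof (induction n arbitrary: m)
  case 0
  have pp: "p > 0" using 0 by simp
  have c: "norm ((q / p) ^ (m + 1)) < 1"
  proof -
    have "(q / p) ^ Suc m < 1" by (rule power_Suc_less_one) (use 0 in auto)
    moreover have "0 \<le> (q / p) ^ (m + 1)" using 0 by simp
    ultimately show ?thesis by simp
  qed
  have g: "(\<lambda>j. ((q / p) ^ (m + 1)) ^ j) sums (1 / (1 - (q / p) ^ (m + 1)))"
    by (rule geometric_sums[OF c])
  have g2: "(\<lambda>j. (1 / p) ^ (m + 1) * ((q / p) ^ (m + 1)) ^ j) sums ((1 / p) ^ (m + 1) * (1 / (1 - (q / p) ^ (m + 1))))"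
    by (rule sums_mult[OF g])
  have eq: "(\<lambda>j. q ^ j / p ^ (j + 1) * ((q ^ j / p ^ (j + 1)) ^ m * pq_power p q 1 (- (q * (q ^ j / p ^ (j + 1)))) 0))
      = (\<lambda>j. (1 / p) ^ (m + 1) * ((q / p) ^ (m + 1)) ^ j)"
    by (rule ext) (simp add: pq_power_def power_divide power_mult[symmetric] power_mult_distrib field_simps power_add mult.commute)
  have val: "(1 / p) ^ (m + 1) * (1 / (1 - (q / p) ^ (m + 1))) = FF p q 0 m / (p - q)"
  proof -
    have "FF p q 0 m = 1 / pq_num p q (m + 1)"
    proof -
      have f0: "pq_fact p q 0 = 1" by (simp add: pq_fact_def)
      have "pq_fact p q m \<noteq> 0" using fact_pos[of q p m] 0 by simp
      then show ?thesis unfolding FF_def using fact_Suc[of p q m] by (simp add: f0)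
    qed
    moreover have "p ^ (m + 1) - q ^ (m + 1) > 0" using power_strict_mono[of q p "m+1"] 0 by simp
    ultimately show ?thesis using pp 0 unfolding pq_num_def
      by (simp add: field_simps power_divide)
  qed
  show ?case using g2 unfolding eq val .
next
  case (Suc n)
  note s1 = Suc.IH[OF Suc.prems, of m]
  note s2 = Suc.IH[OF Suc.prems, of "m + 1"]
  note s = sums_diff[OF sums_mult[OF s1, of "p ^ n"] sums_mult[OF s2, of "q ^ (n + 1)"]]
  have eq: "(\<lambda>j. p ^ n * (q ^ j / p ^ (j + 1) * ((q ^ j / p ^ (j + 1)) ^ m * pq_power p q 1 (- (q * (q ^ j / p ^ (j + 1)))) n))
     - q ^ (n + 1) * (q ^ j / p ^ (j + 1) * ((q ^ j / p ^ (j + 1)) ^ (m + 1) * pq_power p q 1 (- (q * (q ^ j / p ^ (j + 1)))) n)))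
     = (\<lambda>j. q ^ j / p ^ (j + 1) * ((q ^ j / p ^ (j + 1)) ^ m * pq_power p q 1 (- (q * (q ^ j / p ^ (j + 1)))) (Suc n)))"
    by (rule ext) (simp add: pq_power_def algebra_simps)
  have val: "p ^ n * (FF p q n m / (p - q)) - q ^ (n + 1) * (FF p q n (m + 1) / (p - q)) = FF p q (Suc n) m / (p - q)"
    unfolding FF_rec[OF Suc.prems, of n m] by (simp add: diff_divide_distrib)
  show ?case using s unfolding eq val .
qed

lemma pow_part:
  assumes "0 < p"
  shows "p ^ (n * (k + s) + tri n) = p powr (real k * (real n - 1) + real n * (real n - 1) / 2) * (p ^ k * p ^ (n * (s + 1)))"
proof -
  have t: "real (tri n) = real n * (real n + 1) / 2" using tri2[of n]
    by (metis (mono_tags, lifting) nonzero_mult_div_cancel_left of_nat_1 of_nat_add of_nat_mult of_nat_numeral zero_neq_numeral)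
  have e: "real (n * (k + s) + tri n) = (real k * (real n - 1) + real n * (real n - 1) / 2) + (real k + real (n * (s + 1)))"
    unfolding of_nat_add t by (simp add: field_simps)
  have "p ^ (n * (k + s) + tri n) = p powr real (n * (k + s) + tri n)" using assms by (simp only: powr_realpow)
  also have "\<dots> = p powr (real k * (real n - 1) + real n * (real n - 1) / 2) * (p powr real k * p powr real (n * (s + 1)))"
    unfolding e powr_add by simp
  also have "\<dots> = p powr (real k * (real n - 1) + real n * (real n - 1) / 2) * (p ^ k * p ^ (n * (s + 1)))"
    using assms by (simp only: powr_realpow)
  finally show ?thesis .
qed

theorem lemma2:
  fixes p q :: real and n k s :: nat
  assumes "0 < q" "q < p" "p \<le> 1"
  shows "pq_integral p q 1 (\<lambda>t. pq_bern p q n k t * t ^ s) =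
    pq_fact p q (n + k + 1) * pq_fact p q (k + s) / (pq_fact p q k * pq_fact p q (n + k + s + 1))
    * ((p * q) ^ k / pq_num p q (n + 1)) * p ^ (n * (s + 1))"
proof -
  define C where "C = 1 / p powr (real k * (real n - 1) + real n * (real n - 1) / 2) * pq_binom p q (n + k + 1) k * q ^ k"
  have fe: "\<And>t. pq_bern p q n k t * t ^ s = C * (t ^ (k + s) * pq_power p q 1 (- (q * t)) n)"
    unfolding C_def pq_bern_def by (simp add: power_add power_mult_distrib mult_ac)
  note S0 = sums_main[OF assms(1,2), of "k + s" n]
  have S: "(\<lambda>j. q ^ j / p ^ (j + 1) * (pq_bern p q n k (q ^ j / p ^ (j + 1) * 1) * (q ^ j / p ^ (j + 1) * 1) ^ s))
     sums (C * (FF p q n (k + s) / (p - q)))"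
    unfolding fe using sums_mult[OF S0, of C] by (simp add: mult_ac)
  have I: "pq_integral p q 1 (\<lambda>t. pq_bern p q n k t * t ^ s) = C * FF p q n (k + s)"
    unfolding pq_integral_def using sums_unique[OF S, symmetric] assms by simp
  have pp: "p > 0" using assms by simp
  have nz: "pq_fact p q k \<noteq> 0" "pq_fact p q n \<noteq> 0" "pq_num p q (n + 1) \<noteq> 0"
      "pq_fact p q (n + k + s + 1) \<noteq> 0"
    using fact_pos[of q p k] fact_pos[of q p n] fact_pos[of q p "n + k + s + 1"] num_pos[of q p "n+1"] assms by auto
  have pw: "p powr (real k * (real n - 1) + real n * (real n - 1) / 2) > 0" using pp by simp
  have b: "pq_binom p q (n + k + 1) k = pq_fact p q (n + k + 1) / (pq_fact p q k * (pq_fact p q n * pq_num p q (n + 1)))"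
    unfolding pq_binom_def using fact_Suc[of p q n] by simp
  have ff: "FF p q n (k + s) = pq_fact p q (k + s) * pq_fact p q n / pq_fact p q (n + k + s + 1) * p ^ (n * (k + s) + tri n)"
    unfolding FF_def by (simp add: add.assoc)
  show ?thesis unfolding I C_def b ff pow_part[OF pp, of n k s] using nz pw
    by (simp add: field_simps power_mult_distrib)
qed

end
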